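(* Let $\mathbb{C}$ be a partial category, $f:A\to B$ a morphism and $V\le B$. Let $m=\mathrm{id}_B{\downarrow}V:V\to B$ and $m'=\mathrm{id}_A{\downarrow}(A{\uparrow}_fV):A{\uparrow}_fV\to A$. Then the square with sides $f{\uparrow}V:A{\uparrow}_fV\to V$, $m$, $m'$ and $f$ commutes, i.e. $(f{\uparrow}V)m=m'f$, and is a pullback diagram.
   Context: Composition is diagrammatic ($fg$ = first $f$ then $g$). A partial category is a category with a partial order $\le$ on objects, a restriction operator assigning to $U\le A$ and $f:A\to B$ a morphism $f{\downarrow}U:U\to B$, and a contraction operator assigning to $V\le B$ and $f:A\to B$ an object $A{\uparrow}_fV\le A$ and a morphism $f{\uparrow}V:A{\uparrow}_fV\to V$, satisfying: (P.1) $f{\downarrow}A=f$; (P.2) $(f{\downarrow}U){\downarrow}V=f{\downarrow}V$ for $V\le U\le A$; (P.3) $(f{\downarrow}U)g=(fg){\downarrow}U$ for $g:B\to C$; (P.4) $A{\uparrow}_fB=A$ and $f{\uparrow}B=f$; (P.4') $A{\uparrow}_{\mathrm{id}_A}U=U$ and $\mathrm{id}_A{\uparrow}U=\mathrm{id}_U$ for $U\le A$; (P.5) for $W\le V\le B$: $(A{\uparrow}_fV){\uparrow}_{f{\uparrow}V}W=A{\uparrow}_fW$ and $(f{\uparrow}V){\uparrow}W=f{\uparrow}W$; (P.6) for $g:B\to C$, $W\le C$: $A{\uparrow}_f(B{\uparrow}_gW)=A{\uparrow}_{fg}W$ and $(f{\uparrow}(B{\uparrow}_gW))(g{\uparrow}W)=(fg){\uparrow}W$;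 (P.7) for $V\le B$: $(A{\uparrow}_fV){\uparrow}_{f{\downarrow}(A{\uparrow}_fV)}V=A{\uparrow}_fV$ and $(f{\downarrow}(A{\uparrow}_fV)){\uparrow}V=f{\uparrow}V$; (P.8) for $g:B\to C$, $V\le B$: $(fg){\downarrow}(A{\uparrow}_fV)=(f{\uparrow}V)(g{\downarrow}V)$. *)

theory Defs
  imports Main
begin

text \<open>Categories given by explicit carriers. Composition is diagrammatic:
  cmp f g means first f then g, defined when cd f = dm g.\<close>

definition mor :: "'m set \<Rightarrow> ('m \<Rightarrow> 'o) \<Rightarrow> ('m \<Rightarrow> 'o) \<Rightarrow> 'm \<Rightarrow> 'o \<Rightarrow> 'o \<Rightarrow> bool" where
  "mor Arr dm cd f A B \<longleftrightarrow> f \<in> Arr \<and> dm f = A \<and> cd f = B"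

locale category =
  fixes Obj :: "'o set" and Arr :: "'m set"
    and dm :: "'m \<Rightarrow> 'o" and cd :: "'m \<Rightarrow> 'o"
    and cmp :: "'m \<Rightarrow> 'm \<Rightarrow> 'm" and ident :: "'o \<Rightarrow> 'm"
  assumes dm_cd_Obj: "f \<in> Arr \<Longrightarrow> dm f \<in> Obj \<and> cd f \<in> Obj"
    and ident_mor: "A \<in> Obj \<Longrightarrow> mor Arr dm cd (ident A) A A"
    and cmp_mor: "mor Arr dm cd f A B \<Longrightarrow> mor Arr dm cd g B C \<Longrightarrow> mor Arr dm cd (cmp f g) A C"
    and cmp_assoc: "mor Arr dm cd f A B \<Longrightarrow> mor Arr dm cd g B C \<Longrightarrow> mor Arr dm cd h C D \<Longrightarrow>
        cmp (cmp f g) h = cmp f (cmp g h)"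
    and ident_left: "mor Arr dm cd f A B \<Longrightarrow> cmp (ident A) f = f"
    and ident_right: "mor Arr dm cd f A B \<Longrightarrow> cmp f (ident B) = f"

definition is_pullback ::
  "'o set \<Rightarrow> 'm set \<Rightarrow> ('m \<Rightarrow> 'o) \<Rightarrow> ('m \<Rightarrow> 'o) \<Rightarrow> ('m \<Rightarrow> 'm \<Rightarrow> 'm)
   \<Rightarrow> 'o \<Rightarrow> 'o \<Rightarrow> 'o \<Rightarrow> 'o \<Rightarrow> 'm \<Rightarrow> 'm \<Rightarrow> 'm \<Rightarrow> 'm \<Rightarrow> bool" where
  "is_pullback Obj Arr dm cd cmp P A V B p m m' f \<longleftrightarrow>
     mor Arr dm cd p P V \<and> mor Arr dm cd m V B \<and> mor Arr dm cd m' P A \<and> mor Arr dm cd f A B \<and>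
     cmp p m = cmp m' f \<and>
     (\<forall>X\<in>Obj. \<forall>x1 x2. mor Arr dm cd x1 X A \<and> mor Arr dm cd x2 X V \<and> cmp x1 f = cmp x2 m \<longrightarrow>
        (\<exists>!u. mor Arr dm cd u X P \<and> cmp u m' = x1 \<and> cmp u p = x2))"

text \<open>Partial categories. le is the partial order on objects, res f U is f restricted to U,
  cobj f V is the object A contracted along f to V, cmor f V is the contracted morphism.\<close>

locale partial_category = category Obj Arr dm cd cmp ident
  for Obj :: "'o set" and Arr :: "'m set"
    and dm :: "'m \<Rightarrow> 'o" and cd :: "'m \<Rightarrow> 'o"
    and cmp :: "'m \<Rightarrow> 'm \<Rightarrow> 'm" and ident :: "'o \<Rightarrow> 'm" +
  fixes le :: "'o \<Rightarrow> 'o \<Rightarrow> bool"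
    and res :: "'m \<Rightarrow> 'o \<Rightarrow> 'm"
    and cobj :: "'m \<Rightarrow> 'o \<Rightarrow> 'o"
    and cmor :: "'m \<Rightarrow> 'o \<Rightarrow> 'm"
  assumes le_Obj: "le x y \<Longrightarrow> x \<in> Obj \<and> y \<in> Obj"
    and le_refl: "x \<in> Obj \<Longrightarrow> le x x"
    and le_antisym: "le x y \<Longrightarrow> le y x \<Longrightarrow> x = y"
    and le_trans: "le x y \<Longrightarrow> le y z \<Longrightarrow> le x z"
    and res_mor: "mor Arr dm cd f A B \<Longrightarrow> le U A \<Longrightarrow> mor Arr dm cd (res f U) U B"
    and cobj_le: "mor Arr dm cd f A B \<Longrightarrow> le V B \<Longrightarrow> le (cobj f V) A"
    and cmor_mor: "mor Arr dm cd f A B \<Longrightarrow> le V B \<Longrightarrow> mor Arr dm cd (cmor f V) (cobj f V) V"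
    and P1: "mor Arr dm cd f A B \<Longrightarrow> res f A = f"
    and P2: "mor Arr dm cd f A B \<Longrightarrow> le V U \<Longrightarrow> le U A \<Longrightarrow> res (res f U) V = res f V"
    and P3: "mor Arr dm cd f A B \<Longrightarrow> mor Arr dm cd g B C \<Longrightarrow> le U A \<Longrightarrow>
        cmp (res f U) g = res (cmp f g) U"
    and P4: "mor Arr dm cd f A B \<Longrightarrow> cobj f B = A \<and> cmor f B = f"
    and P4': "le U A \<Longrightarrow> cobj (ident A) U = U \<and> cmor (ident A) U = ident U"
    and P5: "mor Arr dm cd f A B \<Longrightarrow> le W V \<Longrightarrow> le V B \<Longrightarrow>
        cobj (cmor f V) W = cobj f W \<and> cmor (cmor f V) W = cmor f W"
    and P6: "mor Arr dm cd f A B \<Longrightarrow> mor Arr dm cd g B C \<Longrightarrow> le W C \<Longrightarrow>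
        cobj f (cobj g W) = cobj (cmp f g) W \<and> cmp (cmor f (cobj g W)) (cmor g W) = cmor (cmp f g) W"
    and P7: "mor Arr dm cd f A B \<Longrightarrow> le V B \<Longrightarrow>
        cobj (res f (cobj f V)) V = cobj f V \<and> cmor (res f (cobj f V)) V = cmor f V"
    and P8: "mor Arr dm cd f A B \<Longrightarrow> mor Arr dm cd g B C \<Longrightarrow> le V B \<Longrightarrow>
        res (cmp f g) (cobj f V) = cmp (cmor f V) (res g V)"

end

theory Submission
  imports Defs
begin

context partial_category
begin

lemma incl_facts:
  assumes "le V B"
  shows "cobj (res (ident B) V) V = V \<and> cmor (res (ident B) V) V = ident V"
proof -
  have B: "B \<in> Obj" "V \<in> Obj" using le_Obj assms by auto
  have i: "mor Arr dm cd (ident B) B B" using ident_mor B by auto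
  have "cobj (ident B) V = V \<and> cmor (ident B) V = ident V" using P4' assms by auto
  with P7[OF i assms] show ?thesis by simp
qed

lemma main:
  assumes f: "mor Arr dm cd f A B" and V: "le V B"
  shows "cmp (cmor f V) (res (ident B) V) = cmp (res (ident A) (cobj f V)) f
    \<and> is_pullback Obj Arr dm cd cmp (cobj f V) A V B
        (cmor f V) (res (ident B) V) (res (ident A) (cobj f V)) f"
proof -
  define P where "P = cobj f V"
  define p where "p = cmor f V"
  define m where "m = res (ident B) V"
  define m' where "m' = res (ident A) P"
  have AB: "A \<in> Obj" "B \<in> Obj" using f dm_cd_Obj unfolding mor_def by auto
  have iA: "mor Arr dm cd (ident A) A A" and iB: "mor Arr dm cd (ident B) B B"
    using ident_mor AB by auto
  have PA: "le P A" unfolding P_def using cobj_le f V by auto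
  have pm: "mor Arr dm cd p P V" unfolding p_def P_def using cmor_mor f V by auto
  have mm: "mor Arr dm cd m V B" unfolding m_def using res_mor iB V by auto
  have m'm: "mor Arr dm cd m' P A" unfolding m'_def using res_mor iA PA by auto
  have mfacts: "cobj m V = V" "cmor m V = ident V" using incl_facts V unfolding m_def by auto
  have m'facts: "cobj m' P = P" "cmor m' P = ident P" using incl_facts PA unfolding m'_def by auto
  have fid: "cmp f (ident B) = f" using ident_right f by auto
  have c1: "cmp p m = res f P"
    using P8[OF f iB V] fid unfolding p_def m_def P_def by simp
  have c2: "cmp m' f = res f P"
    using P3[OF iA f PA] ident_left[OF f] unfolding m'_def by simp
  have comm: "cmp p m = cmp m' f" using c1 c2 by simp
  have univ: "\<exists>!u. mor Arr dm cd u X P \<and> cmp u m' = x1 \<and> cmp u p = x2"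
    if x1: "mor Arr dm cd x1 X A" and x2: "mor Arr dm cd x2 X V" and eq: "cmp x1 f = cmp x2 m"
    for X x1 x2
  proof
    have x1f: "mor Arr dm cd (cmp x1 f) X B" using cmp_mor x1 f by auto
    have "cobj x1 P = cobj (cmp x1 f) V" using P6[OF x1 f V] unfolding P_def by simp
    also have "\<dots> = cobj (cmp x2 m) V" using eq by simp
    also have "\<dots> = cobj x2 (cobj m V)" using P6[OF x2 mm V] by simp
    also have "\<dots> = X" using mfacts P4[OF x2] by simp
    finally have cx: "cobj x1 P = X" .
    have um: "mor Arr dm cd (cmor x1 P) X P" using cmor_mor[OF x1 PA] cx by simp
    have "cmp (cmor x1 P) p = cmor (cmp x1 f) V" using P6[OF x1 f V] unfolding P_def p_def by simp
    also have "\<dots> = cmor (cmp x2 m) V" using eq by simp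
    also have "\<dots> = cmp (cmor x2 (cobj m V)) (cmor m V)" using P6[OF x2 mm V] by simp
    also have "\<dots> = x2" using mfacts P4[OF x2] ident_right[OF x2] by simp
    finally have u2: "cmp (cmor x1 P) p = x2" .
    have "res (cmp x1 (ident A)) (cobj x1 P) = cmp (cmor x1 P) (res (ident A) P)"
      using P8[OF x1 iA PA] .
    hence u1: "cmp (cmor x1 P) m' = x1" using ident_right[OF x1] cx P1[OF x1] unfolding m'_def by simp
    show "mor Arr dm cd (cmor x1 P) X P \<and> cmp (cmor x1 P) m' = x1 \<and> cmp (cmor x1 P) p = x2"
      using um u1 u2 by simp
    fix u assume u: "mor Arr dm cd u X P \<and> cmp u m' = x1 \<and> cmp u p = x2"
    hence um: "mor Arr dm cd u X P" and e1: "cmp u m' = x1" by auto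
    have "cmor x1 P = cmor (cmp u m') P" using e1 by simp
    also have "\<dots> = cmp (cmor u (cobj m' P)) (cmor m' P)"
      using P6[OF um m'm, of P] PA le_Obj le_refl by metis
    also have "\<dots> = u" using m'facts P4[OF um] ident_right[OF um] by simp
    finally show "u = cmor x1 P" by simp
  qed
  show ?thesis
    unfolding is_pullback_def P_def[symmetric] p_def[symmetric] m_def[symmetric] m'_def[symmetric]
    using comm pm mm m'm f univ by blast
qed

end

theorem lemma10p10:
  assumes "partial_category Obj Arr dm cd cmp ident le res cobj cmor"
    and "mor Arr dm cd f A B"
    and "le V B"
  shows "cmp (cmor f V) (res (ident B) V) = cmp (res (ident A) (cobj f V)) f
    \<and> is_pullback Obj Arr dm cd cmp (cobj f V) A V B
        (cmor f V) (res (ident B) V) (res (ident A) (cobj f V)) f"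
  using partial_category.main[OF assms] .

end
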